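(* Let $M$ be a centrally endo-AIP right $R$-module, $S=\mathrm{End}_R(M)$, and let $N$ be a fully invariant submodule of $M$ with $T=\mathrm{End}_R(N)$. If every $\psi\in T$ extends to some $\bar\psi\in S$ (i.e. $\bar\psi|_N=\psi$), then $N$ is a centrally endo-AIP module.
   Context: For a module $X$ with $E=\mathrm{End}_R(X)$ and $K\le X$, $l_E(K)=\{\phi\in E:\phi(K)=0\}$. An ideal $I$ of $E$ is centrally s-unital if for every $a\in I$ there is $z\in I$ central in $E$ with $az=a$. $X$ is centrally endo-AIP if $l_E(K)$ is a centrally s-unital ideal of $E$ for every fully invariant submodule $K$ of $X$. *)

theory Defs
  imports "HOL-Algebra.Algebra" "HOL-Library.FuncSet"
begin

text \<open>The module is an abelian group M (HOL-Algebra ring-record, only the additive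
  part is used) together with a right scalar action act m r = m r.\<close>

definition right_module ::
  "('r, 'a) ring_scheme \<Rightarrow> ('m, 'b) ring_scheme \<Rightarrow> ('m \<Rightarrow> 'r \<Rightarrow> 'm) \<Rightarrow> bool" where
  "right_module R M act \<longleftrightarrow> ring R \<and> abelian_group M \<and>
     (\<forall>m\<in>carrier M. \<forall>r\<in>carrier R. act m r \<in> carrier M) \<and>
     (\<forall>m\<in>carrier M. \<forall>n\<in>carrier M. \<forall>r\<in>carrier R.
         act (m \<oplus>\<^bsub>M\<^esub> n) r = act m r \<oplus>\<^bsub>M\<^esub> act n r) \<and>
     (\<forall>m\<in>carrier M. \<forall>r\<in>carrier R. \<forall>s\<in>carrier R.
         act m (r \<oplus>\<^bsub>R\<^esub> s) = act m r \<oplus>\<^bsub>M\<^esub> act m s) \<and>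
     (\<forall>m\<in>carrier M. \<forall>r\<in>carrier R. \<forall>s\<in>carrier R.
         act m (r \<otimes>\<^bsub>R\<^esub> s) = act (act m r) s) \<and>
     (\<forall>m\<in>carrier M. act m \<one>\<^bsub>R\<^esub> = m)"

definition submodule ::
  "('r, 'a) ring_scheme \<Rightarrow> ('m, 'b) ring_scheme \<Rightarrow> ('m \<Rightarrow> 'r \<Rightarrow> 'm) \<Rightarrow> 'm set \<Rightarrow> bool" where
  "submodule R M act K \<longleftrightarrow> K \<subseteq> carrier M \<and> subgroup K (add_monoid M) \<and>
     (\<forall>k\<in>K. \<forall>r\<in>carrier R. act k r \<in> K)"

definition End_set ::
  "('r, 'a) ring_scheme \<Rightarrow> ('m, 'b) ring_scheme \<Rightarrow> ('m \<Rightarrow> 'r \<Rightarrow> 'm) \<Rightarrow> ('m \<Rightarrow> 'm) set" where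
  "End_set R Q act = {f. f \<in> PiE (carrier Q) (\<lambda>_. carrier Q) \<and>
     (\<forall>x\<in>carrier Q. \<forall>y\<in>carrier Q. f (x \<oplus>\<^bsub>Q\<^esub> y) = f x \<oplus>\<^bsub>Q\<^esub> f y) \<and>
     (\<forall>x\<in>carrier Q. \<forall>r\<in>carrier R. f (act x r) = act (f x) r)}"

definition End_ring ::
  "('r, 'a) ring_scheme \<Rightarrow> ('m, 'b) ring_scheme \<Rightarrow> ('m \<Rightarrow> 'r \<Rightarrow> 'm) \<Rightarrow> ('m \<Rightarrow> 'm) ring" where
  "End_ring R Q act =
     \<lparr>carrier = End_set R Q act,
      monoid.mult = (\<lambda>f g. compose (carrier Q) f g),
      monoid.one = (\<lambda>x\<in>carrier Q. x),
      ring.zero = (\<lambda>x\<in>carrier Q. \<zero>\<^bsub>Q\<^esub>),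
      ring.add = (\<lambda>f g. \<lambda>x\<in>carrier Q. f x \<oplus>\<^bsub>Q\<^esub> g x)\<rparr>"

definition fully_invariant ::
  "('r, 'a) ring_scheme \<Rightarrow> ('m, 'b) ring_scheme \<Rightarrow> ('m \<Rightarrow> 'r \<Rightarrow> 'm) \<Rightarrow> 'm set \<Rightarrow> bool" where
  "fully_invariant R Q act K \<longleftrightarrow> submodule R Q act K \<and>
     (\<forall>f\<in>End_set R Q act. f ` K \<subseteq> K)"

definition l_ann ::
  "('r, 'a) ring_scheme \<Rightarrow> ('m, 'b) ring_scheme \<Rightarrow> ('m \<Rightarrow> 'r \<Rightarrow> 'm) \<Rightarrow> 'm set \<Rightarrow> ('m \<Rightarrow> 'm) set" where
  "l_ann R Q act K = {\<phi> \<in> End_set R Q act. \<forall>k\<in>K. \<phi> k = \<zero>\<^bsub>Q\<^esub>}"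

definition centrally_s_unital :: "'e set \<Rightarrow> ('e, 'c) ring_scheme \<Rightarrow> bool" where
  "centrally_s_unital I E \<longleftrightarrow> ideal I E \<and>
     (\<forall>a\<in>I. \<exists>z\<in>I. (\<forall>x\<in>carrier E. z \<otimes>\<^bsub>E\<^esub> x = x \<otimes>\<^bsub>E\<^esub> z) \<and> a \<otimes>\<^bsub>E\<^esub> z = a)"

definition centrally_endo_AIP ::
  "('r, 'a) ring_scheme \<Rightarrow> ('m, 'b) ring_scheme \<Rightarrow> ('m \<Rightarrow> 'r \<Rightarrow> 'm) \<Rightarrow> bool" where
  "centrally_endo_AIP R Q act \<longleftrightarrow>
     (\<forall>K. fully_invariant R Q act K \<longrightarrow>
        centrally_s_unital (l_ann R Q act K) (End_ring R Q act))"

end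

theory Submission
  imports Defs
begin

lemma End_setD:
  assumes "f \<in> End_set R Q act"
  shows "\<And>x. x \<in> carrier Q \<Longrightarrow> f x \<in> carrier Q"
    and "\<And>x. x \<notin> carrier Q \<Longrightarrow> f x = undefined"
    and "\<And>x y. x \<in> carrier Q \<Longrightarrow> y \<in> carrier Q \<Longrightarrow> f (x \<oplus>\<^bsub>Q\<^esub> y) = f x \<oplus>\<^bsub>Q\<^esub> f y"
    and "\<And>x r. x \<in> carrier Q \<Longrightarrow> r \<in> carrier R \<Longrightarrow> f (act x r) = act (f x) r"
  using assms unfolding End_set_def by (auto simp: PiE_def extensional_def)

lemma End_set_eq:
  assumes "f \<in> End_set R Q act" "g \<in> End_set R Q act" "\<And>x. x \<in> carrier Q \<Longrightarrow> f x = g x"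
  shows "f = g"
  using assms End_setD(2)[OF assms(1)] End_setD(2)[OF assms(2)] by (metis ext)

locale emod =
  fixes R :: "('r, 'a) ring_scheme" and Q :: "('m, 'b) ring_scheme" and act :: "'m \<Rightarrow> 'r \<Rightarrow> 'm"
  assumes ag: "abelian_group Q"
    and actc: "\<And>x r. x \<in> carrier Q \<Longrightarrow> r \<in> carrier R \<Longrightarrow> act x r \<in> carrier Q"
    and acta: "\<And>x y r. x \<in> carrier Q \<Longrightarrow> y \<in> carrier Q \<Longrightarrow> r \<in> carrier R \<Longrightarrow>
        act (x \<oplus>\<^bsub>Q\<^esub> y) r = act x r \<oplus>\<^bsub>Q\<^esub> act y r"
begin

interpretation Q: abelian_group Q by (rule ag)

lemma act_zero: "r \<in> carrier R \<Longrightarrow> act \<zero>\<^bsub>Q\<^esub> r = \<zero>\<^bsub>Q\<^esub>"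
proof -
  assume r: "r \<in> carrier R"
  have "act \<zero>\<^bsub>Q\<^esub> r \<oplus>\<^bsub>Q\<^esub> act \<zero>\<^bsub>Q\<^esub> r = act \<zero>\<^bsub>Q\<^esub> r \<oplus>\<^bsub>Q\<^esub> \<zero>\<^bsub>Q\<^esub>"
    using acta[of "\<zero>\<^bsub>Q\<^esub>" "\<zero>\<^bsub>Q\<^esub>" r] r actc by simp
  then show ?thesis using r actc by (metis Q.add.l_cancel Q.zero_closed)
qed

lemma act_neg: "x \<in> carrier Q \<Longrightarrow> r \<in> carrier R \<Longrightarrow> act (\<ominus>\<^bsub>Q\<^esub> x) r = \<ominus>\<^bsub>Q\<^esub> act x r"
proof -
  assume x: "x \<in> carrier Q" and r: "r \<in> carrier R"
  have "act (\<ominus>\<^bsub>Q\<^esub> x) r \<oplus>\<^bsub>Q\<^esub> act x r = \<zero>\<^bsub>Q\<^esub>"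
    using acta[of "\<ominus>\<^bsub>Q\<^esub> x" x r] x r act_zero by (simp add: Q.l_neg)
  then show ?thesis using x r actc by (simp add: Q.minus_equality)
qed

abbreviation "E \<equiv> End_ring R Q act"

lemma E_simps: "carrier E = End_set R Q act"
  "f \<otimes>\<^bsub>E\<^esub> g = compose (carrier Q) f g"
  "\<one>\<^bsub>E\<^esub> = (\<lambda>x\<in>carrier Q. x)"
  "\<zero>\<^bsub>E\<^esub> = (\<lambda>x\<in>carrier Q. \<zero>\<^bsub>Q\<^esub>)"
  "f \<oplus>\<^bsub>E\<^esub> g = (\<lambda>x\<in>carrier Q. f x \<oplus>\<^bsub>Q\<^esub> g x)"
  by (simp_all add: End_ring_def)

lemma add_closed: "f \<in> End_set R Q act \<Longrightarrow> g \<in> End_set R Q act \<Longrightarrow>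
   (\<lambda>x\<in>carrier Q. f x \<oplus>\<^bsub>Q\<^esub> g x) \<in> End_set R Q act"
  unfolding End_set_def using acta actc by (auto simp: PiE_def Pi_def Q.a_ac)

lemma zero_closed: "(\<lambda>x\<in>carrier Q. \<zero>\<^bsub>Q\<^esub>) \<in> End_set R Q act"
  unfolding End_set_def using act_zero actc by (auto simp: PiE_def Pi_def)

lemma neg_closed: "f \<in> End_set R Q act \<Longrightarrow> (\<lambda>x\<in>carrier Q. \<ominus>\<^bsub>Q\<^esub> f x) \<in> End_set R Q act"
  unfolding End_set_def using act_neg actc by (auto simp: PiE_def Pi_def Q.minus_add)

lemma comp_closed: "f \<in> End_set R Q act \<Longrightarrow> g \<in> End_set R Q act \<Longrightarrow>
   compose (carrier Q) f g \<in> End_set R Q act"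
  unfolding End_set_def using actc by (auto simp: PiE_def Pi_def compose_def)

lemma one_closed: "(\<lambda>x\<in>carrier Q. x) \<in> End_set R Q act"
  unfolding End_set_def using actc by (auto simp: PiE_def Pi_def)

lemma Ecl: "f \<in> carrier E \<Longrightarrow> g \<in> carrier E \<Longrightarrow> f \<oplus>\<^bsub>E\<^esub> g \<in> carrier E"
  "f \<in> carrier E \<Longrightarrow> g \<in> carrier E \<Longrightarrow> f \<otimes>\<^bsub>E\<^esub> g \<in> carrier E"
  "\<zero>\<^bsub>E\<^esub> \<in> carrier E" "\<one>\<^bsub>E\<^esub> \<in> carrier E"
  by (simp_all only: E_simps add_closed comp_closed zero_closed one_closed)

lemma Eapp: "x \<in> carrier Q \<Longrightarrow> (f \<oplus>\<^bsub>E\<^esub> g) x = f x \<oplus>\<^bsub>Q\<^esub> g x"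
  "x \<in> carrier Q \<Longrightarrow> (f \<otimes>\<^bsub>E\<^esub> g) x = f (g x)"
  "x \<in> carrier Q \<Longrightarrow> \<zero>\<^bsub>E\<^esub> x = \<zero>\<^bsub>Q\<^esub>"
  "x \<in> carrier Q \<Longrightarrow> \<one>\<^bsub>E\<^esub> x = x"
  by (simp_all add: E_simps compose_def)

lemma Eeq: "f \<in> carrier E \<Longrightarrow> g \<in> carrier E \<Longrightarrow> (\<And>x. x \<in> carrier Q \<Longrightarrow> f x = g x) \<Longrightarrow> f = g"
  using End_set_eq[of f R Q act g] by (simp add: E_simps)

lemma EmemQ: "f \<in> carrier E \<Longrightarrow> x \<in> carrier Q \<Longrightarrow> f x \<in> carrier Q"
  "f \<in> carrier E \<Longrightarrow> x \<in> carrier Q \<Longrightarrow> y \<in> carrier Q \<Longrightarrow> f (x \<oplus>\<^bsub>Q\<^esub> y) = f x \<oplus>\<^bsub>Q\<^esub> f y"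
  using End_setD[of f R Q act] by (simp_all add: E_simps)

lemma ring_E: "ring E"
proof (rule ringI)
  show "abelian_group E"
  proof (rule abelian_groupI)
    fix x assume x: "x \<in> carrier E"
    show "\<exists>y\<in>carrier E. y \<oplus>\<^bsub>E\<^esub> x = \<zero>\<^bsub>E\<^esub>"
    proof (intro bexI)
      show "(\<lambda>a\<in>carrier Q. \<ominus>\<^bsub>Q\<^esub> x a) \<in> carrier E" using x neg_closed E_simps by simp
      show "(\<lambda>a\<in>carrier Q. \<ominus>\<^bsub>Q\<^esub> x a) \<oplus>\<^bsub>E\<^esub> x = \<zero>\<^bsub>E\<^esub>"
        using x End_setD[of x R Q act] by (auto simp: E_simps Q.l_neg)
    qed
  qed (auto simp: Ecl Eapp EmemQ Q.a_ac intro!: Eeq)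
next
  show "monoid E"
    by (rule monoidI) (auto simp: Ecl Eapp EmemQ intro!: Eeq)
qed (auto simp: Ecl Eapp EmemQ intro!: Eeq)


lemma E_zero_map: "f \<in> carrier E \<Longrightarrow> f \<zero>\<^bsub>Q\<^esub> = \<zero>\<^bsub>Q\<^esub>"
proof -
  assume f: "f \<in> carrier E"
  have "f \<zero>\<^bsub>Q\<^esub> \<oplus>\<^bsub>Q\<^esub> f \<zero>\<^bsub>Q\<^esub> = f \<zero>\<^bsub>Q\<^esub> \<oplus>\<^bsub>Q\<^esub> \<zero>\<^bsub>Q\<^esub>"
    using EmemQ(2)[OF f, of "\<zero>\<^bsub>Q\<^esub>" "\<zero>\<^bsub>Q\<^esub>"] EmemQ(1)[OF f] by simp
  then show ?thesis using EmemQ(1)[OF f] by (metis Q.add.l_cancel Q.zero_closed)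
qed

lemma l_ann_ideal:
  assumes K: "K \<subseteq> carrier Q" and fi: "\<And>f. f \<in> End_set R Q act \<Longrightarrow> f ` K \<subseteq> K"
  shows "ideal (l_ann R Q act K) E"
proof -
  interpret E: ring E by (rule ring_E)
  have neg: "\<ominus>\<^bsub>E\<^esub> a = (\<lambda>x\<in>carrier Q. \<ominus>\<^bsub>Q\<^esub> a x)" if a: "a \<in> carrier E" for a
  proof -
    have c: "(\<lambda>x\<in>carrier Q. \<ominus>\<^bsub>Q\<^esub> a x) \<in> carrier E" using a neg_closed E_simps by simp
    have e: "(\<lambda>x\<in>carrier Q. \<ominus>\<^bsub>Q\<^esub> a x) \<oplus>\<^bsub>E\<^esub> a = \<zero>\<^bsub>E\<^esub>"
      using a End_setD[of a R Q act] by (auto simp: E_simps Q.l_neg)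
    show ?thesis by (rule E.minus_equality[OF e a c])
  qed
  show ?thesis
  proof (rule idealI)
    show "ring E" by (rule ring_E)
    show "subgroup (l_ann R Q act K) (add_monoid E)"
    proof (rule group.subgroupI[OF E.a_group])
      show "l_ann R Q act K \<subseteq> carrier (add_monoid E)" by (auto simp: l_ann_def E_simps)
      show "l_ann R Q act K \<noteq> {}"
        using Ecl(3) K by (auto simp: l_ann_def E_simps intro!: exI[of _ "\<zero>\<^bsub>E\<^esub>"])
      fix a assume a: "a \<in> l_ann R Q act K"
      then have aE: "a \<in> carrier E" by (simp add: l_ann_def E_simps)
      have "inv\<^bsub>add_monoid E\<^esub> a = \<ominus>\<^bsub>E\<^esub> a" by (simp add: a_inv_def)
      then show "inv\<^bsub>add_monoid E\<^esub> a \<in> l_ann R Q act K"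
        using a aE neg[OF aE] neg_closed K by (auto simp: l_ann_def E_simps)
    next
      fix a b assume "a \<in> l_ann R Q act K" "b \<in> l_ann R Q act K"
      then show "a \<otimes>\<^bsub>add_monoid E\<^esub> b \<in> l_ann R Q act K"
        using add_closed K by (auto simp: l_ann_def E_simps)
    qed
  next
    fix a x assume a: "a \<in> l_ann R Q act K" and x: "x \<in> carrier E"
    show "x \<otimes>\<^bsub>E\<^esub> a \<in> l_ann R Q act K"
      using a x K E_zero_map[OF x] comp_closed
      by (auto simp: l_ann_def E_simps compose_def)
    show "a \<otimes>\<^bsub>E\<^esub> x \<in> l_ann R Q act K"
      using a x K fi[of x] comp_closed
      by (auto simp: l_ann_def E_simps compose_def)
  qed
qed

end

lemma restrict_End:
  assumes f: "f \<in> End_set R M act" and NM: "N \<subseteq> carrier M" and fN: "f ` N \<subseteq> N"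
    and actN: "\<And>x r. x \<in> N \<Longrightarrow> r \<in> carrier R \<Longrightarrow> act x r \<in> N"
    and addN: "\<And>x y. x \<in> N \<Longrightarrow> y \<in> N \<Longrightarrow> x \<oplus>\<^bsub>M\<^esub> y \<in> N"
  shows "restrict f N \<in> End_set R (M\<lparr>carrier := N\<rparr>) act"
  using f NM fN actN addN unfolding End_set_def by (auto simp: PiE_def Pi_def subset_iff)

theorem proposition2p8:
  fixes R :: "('r, 'a) ring_scheme" and M :: "('m, 'b) ring_scheme"
    and act :: "'m \<Rightarrow> 'r \<Rightarrow> 'm" and N :: "'m set"
  assumes "right_module R M act"
    and "centrally_endo_AIP R M act"
    and "fully_invariant R M act N"
    and "\<forall>\<psi>\<in>End_set R (M\<lparr>carrier := N\<rparr>) act.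
           \<exists>\<phi>\<in>End_set R M act. restrict \<phi> N = \<psi>"
  shows "centrally_endo_AIP R (M\<lparr>carrier := N\<rparr>) act"
proof -
  define Q where "Q = M\<lparr>carrier := N\<rparr>"
  note rm = assms(1)[unfolded right_module_def]
  interpret M: abelian_group M using rm by blast
  have NM: "N \<subseteq> carrier M" and Nsg: "subgroup N (add_monoid M)"
    and actN: "\<And>x r. x \<in> N \<Longrightarrow> r \<in> carrier R \<Longrightarrow> act x r \<in> N"
    and fiN: "\<And>f. f \<in> End_set R M act \<Longrightarrow> f ` N \<subseteq> N"
    using assms(3) by (auto simp: fully_invariant_def submodule_def)
  have addN: "\<And>x y. x \<in> N \<Longrightarrow> y \<in> N \<Longrightarrow> x \<oplus>\<^bsub>M\<^esub> y \<in> N"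
    using subgroup.m_closed[OF Nsg] by simp
  have zN: "\<zero>\<^bsub>M\<^esub> \<in> N" using subgroup.one_closed[OF Nsg] by simp
  have negN: "\<And>x. x \<in> N \<Longrightarrow> \<ominus>\<^bsub>M\<^esub> x \<in> N"
    using subgroup.m_inv_closed[OF Nsg] by (simp add: a_inv_def)
  have QS: "carrier Q = N" "\<And>x y. x \<oplus>\<^bsub>Q\<^esub> y = x \<oplus>\<^bsub>M\<^esub> y" "\<zero>\<^bsub>Q\<^esub> = \<zero>\<^bsub>M\<^esub>"
    by (simp_all add: Q_def)
  have agQ: "abelian_group Q"
  proof (rule abelian_groupI)
    fix x assume "x \<in> carrier Q"
    then show "\<exists>y\<in>carrier Q. y \<oplus>\<^bsub>Q\<^esub> x = \<zero>\<^bsub>Q\<^esub>"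
      using negN NM by (auto simp: QS intro!: bexI[of _ "\<ominus>\<^bsub>M\<^esub> x"] M.l_neg)
  next
    fix x y assume "x \<in> carrier Q" "y \<in> carrier Q"
    then show "x \<oplus>\<^bsub>Q\<^esub> y \<in> carrier Q" using addN QS by simp
  next
    show "\<zero>\<^bsub>Q\<^esub> \<in> carrier Q" using zN QS by simp
  next
    fix x y z assume "x \<in> carrier Q" "y \<in> carrier Q" "z \<in> carrier Q"
    then show "x \<oplus>\<^bsub>Q\<^esub> y \<oplus>\<^bsub>Q\<^esub> z = x \<oplus>\<^bsub>Q\<^esub> (y \<oplus>\<^bsub>Q\<^esub> z)"
      using NM QS M.a_assoc by (metis subsetD)
  next
    fix x y assume "x \<in> carrier Q" "y \<in> carrier Q"
    then show "x \<oplus>\<^bsub>Q\<^esub> y = y \<oplus>\<^bsub>Q\<^esub> x"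
      using NM QS M.a_comm by (metis subsetD)
  next
    fix x assume "x \<in> carrier Q"
    then show "\<zero>\<^bsub>Q\<^esub> \<oplus>\<^bsub>Q\<^esub> x = x"
      using NM QS M.l_zero by (metis subsetD)
  qed
  interpret Qg: abelian_group Q by (rule agQ)
  have negQ: "\<And>x. x \<in> N \<Longrightarrow> \<ominus>\<^bsub>Q\<^esub> x = \<ominus>\<^bsub>M\<^esub> x"
  proof -
    fix x assume x: "x \<in> N"
    have "\<ominus>\<^bsub>M\<^esub> x \<oplus>\<^bsub>Q\<^esub> x = \<zero>\<^bsub>Q\<^esub>" using x NM by (auto simp: QS M.l_neg)
    then show "\<ominus>\<^bsub>Q\<^esub> x = \<ominus>\<^bsub>M\<^esub> x" using x negN by (simp add: Qg.minus_equality QS)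
  qed
  have actM: "\<And>m n r. m \<in> carrier M \<Longrightarrow> n \<in> carrier M \<Longrightarrow> r \<in> carrier R \<Longrightarrow>
      act (m \<oplus>\<^bsub>M\<^esub> n) r = act m r \<oplus>\<^bsub>M\<^esub> act n r"
    and actcM: "\<And>m r. m \<in> carrier M \<Longrightarrow> r \<in> carrier R \<Longrightarrow> act m r \<in> carrier M"
    using rm by blast+
  have emQ: "emod R Q act"
  proof (rule emod.intro)
    show "abelian_group Q" by (rule agQ)
    fix x r assume xr: "x \<in> carrier Q" "r \<in> carrier R"
    show "act x r \<in> carrier Q" unfolding QS(1) using actN xr unfolding QS(1) by blast
  next
    fix x y r assume xyr: "x \<in> carrier Q" "y \<in> carrier Q" "r \<in> carrier R"
    then have "x \<in> carrier M" "y \<in> carrier M" unfolding QS(1) using NM by auto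
    then show "act (x \<oplus>\<^bsub>Q\<^esub> y) r = act x r \<oplus>\<^bsub>Q\<^esub> act y r"
      unfolding QS(2) using actM xyr(3) by blast
  qed
  have emM: "emod R M act"
  proof (rule emod.intro)
    show "abelian_group M" using rm by blast
  qed (use actM actcM in blast)+
  have ext: "\<forall>\<psi>\<in>End_set R Q act. \<exists>\<phi>\<in>End_set R M act. restrict \<phi> N = \<psi>"
    using assms(4) by (simp add: Q_def)
  have resE: "\<And>f. f \<in> End_set R M act \<Longrightarrow> restrict f N \<in> End_set R Q act"
    unfolding Q_def by (rule restrict_End[OF _ NM fiN actN addN])
  show ?thesis
    unfolding Q_def[symmetric] centrally_endo_AIP_def
  proof (intro allI impI)
    fix K assume fiK: "fully_invariant R Q act K"
    have KN: "K \<subseteq> N" and Ksg: "subgroup K (add_monoid Q)"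
      and actK: "\<And>x r. x \<in> K \<Longrightarrow> r \<in> carrier R \<Longrightarrow> act x r \<in> K"
      and fiK': "\<And>f. f \<in> End_set R Q act \<Longrightarrow> f ` K \<subseteq> K"
      using fiK by (auto simp: fully_invariant_def submodule_def QS)
    have idl: "ideal (l_ann R Q act K) (End_ring R Q act)"
      using emod.l_ann_ideal[OF emQ] KN fiK' QS by blast
    have KsgM: "subgroup K (add_monoid M)"
    proof (rule group.subgroupI[OF M.a_group])
      show "K \<subseteq> carrier (add_monoid M)" using KN NM by auto
      show "K \<noteq> {}" using subgroup.one_closed[OF Ksg] by auto
      fix a assume a: "a \<in> K"
      then show "inv\<^bsub>add_monoid M\<^esub> a \<in> K"
        using subgroup.m_inv_closed[OF Ksg a] negQ[of a] KN by (auto simp: a_inv_def[symmetric])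
    next
      fix a b assume "a \<in> K" "b \<in> K"
      then show "a \<otimes>\<^bsub>add_monoid M\<^esub> b \<in> K"
        using subgroup.m_closed[OF Ksg] by (simp add: QS)
    qed
    have fiKM: "fully_invariant R M act K"
      unfolding fully_invariant_def submodule_def
    proof (intro conjI ballI KsgM)
      show "K \<subseteq> carrier M" using KN NM by auto
      show "\<And>k r. k \<in> K \<Longrightarrow> r \<in> carrier R \<Longrightarrow> act k r \<in> K" by (rule actK)
      fix f assume f: "f \<in> End_set R M act"
      have "restrict f N ` K \<subseteq> K" using fiK'[OF resE[OF f]] .
      then show "f ` K \<subseteq> K" using KN by auto
    qed
    have csM: "centrally_s_unital (l_ann R M act K) (End_ring R M act)"
      using assms(2) fiKM by (simp add: centrally_endo_AIP_def)
    show "centrally_s_unital (l_ann R Q act K) (End_ring R Q act)"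
      unfolding centrally_s_unital_def
    proof (intro conjI idl ballI)
      fix a assume a: "a \<in> l_ann R Q act K"
      then have aQ: "a \<in> End_set R Q act" by (simp add: l_ann_def)
      obtain \<phi> where \<phi>: "\<phi> \<in> End_set R M act" "restrict \<phi> N = a"
        using bspec[OF ext aQ] by (elim bexE) (rule that)
      have \<phi>a: "\<And>x. x \<in> N \<Longrightarrow> \<phi> x = a x" using \<phi>(2) by auto
      have ak: "\<forall>k\<in>K. a k = \<zero>\<^bsub>M\<^esub>" using a by (simp add: l_ann_def QS)
      have "\<forall>k\<in>K. \<phi> k = \<zero>\<^bsub>M\<^esub>"
      proof
        fix k assume k: "k \<in> K"
        then have "k \<in> N" using KN by (rule subsetD[rotated])
        then show "\<phi> k = \<zero>\<^bsub>M\<^esub>" using \<phi>a[of k] bspec[OF ak k] by simp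
      qed
      then have "\<phi> \<in> l_ann R M act K" using \<phi>(1) by (simp add: l_ann_def)
      then have "\<exists>z\<in>l_ann R M act K. (\<forall>x\<in>carrier (End_ring R M act). z \<otimes>\<^bsub>End_ring R M act\<^esub> x = x \<otimes>\<^bsub>End_ring R M act\<^esub> z) \<and> \<phi> \<otimes>\<^bsub>End_ring R M act\<^esub> z = \<phi>"
        using csM unfolding centrally_s_unital_def by (elim conjE) (erule bspec)
      then obtain z where z: "z \<in> l_ann R M act K"
        and zc: "\<And>x. x \<in> carrier (End_ring R M act) \<Longrightarrow> z \<otimes>\<^bsub>End_ring R M act\<^esub> x = x \<otimes>\<^bsub>End_ring R M act\<^esub> z"
        and za: "\<phi> \<otimes>\<^bsub>End_ring R M act\<^esub> z = \<phi>"
        by (elim bexE conjE) (rule that, assumption, blast, assumption)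
      have zE: "z \<in> End_set R M act" using z by (simp add: l_ann_def)
      have zN: "\<And>x. x \<in> N \<Longrightarrow> z x \<in> N" using fiN[OF zE] by auto
      define z' where "z' = restrict z N"
      have z'E: "z' \<in> carrier (End_ring R Q act)" using resE[OF zE] by (simp add: z'_def emod.E_simps[OF emQ])
      show "\<exists>z\<in>l_ann R Q act K. (\<forall>x\<in>carrier (End_ring R Q act).
              z \<otimes>\<^bsub>End_ring R Q act\<^esub> x = x \<otimes>\<^bsub>End_ring R Q act\<^esub> z) \<and>
              a \<otimes>\<^bsub>End_ring R Q act\<^esub> z = a"
      proof (intro bexI conjI ballI)
        show "z' \<in> l_ann R Q act K"
          using z z'E KN by (auto simp: l_ann_def z'_def emod.E_simps[OF emQ] QS)
        fix x assume x: "x \<in> carrier (End_ring R Q act)"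
        then have xQ: "x \<in> End_set R Q act" by (simp add: emod.E_simps[OF emQ])
        obtain xb where xb: "xb \<in> End_set R M act" "restrict xb N = x"
          using bspec[OF ext xQ] by (elim bexE) (rule that)
        have xbx: "\<And>n. n \<in> N \<Longrightarrow> xb n = x n" using xb(2) by auto
        have xN: "\<And>n. n \<in> N \<Longrightarrow> x n \<in> N" using End_setD(1)[OF xQ] QS by auto
        have comm: "z (xb n) = xb (z n)" if n: "n \<in> N" for n
        proof -
          have "(z \<otimes>\<^bsub>End_ring R M act\<^esub> xb) n = (xb \<otimes>\<^bsub>End_ring R M act\<^esub> z) n"
            using zc[of xb] xb(1) by (simp add: emod.E_simps[OF emM])
          then show ?thesis using n NM by (simp add: emod.Eapp[OF emM] subset_iff)
        qed
        show "z' \<otimes>\<^bsub>End_ring R Q act\<^esub> x = x \<otimes>\<^bsub>End_ring R Q act\<^esub> z'"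
        proof (rule emod.Eeq[OF emQ])
          show "z' \<otimes>\<^bsub>End_ring R Q act\<^esub> x \<in> carrier (End_ring R Q act)"
            using emod.Ecl(2)[OF emQ z'E x] .
          show "x \<otimes>\<^bsub>End_ring R Q act\<^esub> z' \<in> carrier (End_ring R Q act)"
            using emod.Ecl(2)[OF emQ x z'E] .
          fix n assume n: "n \<in> carrier Q"
          then show "(z' \<otimes>\<^bsub>End_ring R Q act\<^esub> x) n = (x \<otimes>\<^bsub>End_ring R Q act\<^esub> z') n"
            using comm[of n] xbx xN zN by (simp add: emod.Eapp[OF emQ] z'_def QS)
        qed
      next
        show "a \<otimes>\<^bsub>End_ring R Q act\<^esub> z' = a"
        proof (rule emod.Eeq[OF emQ])
          have aE: "a \<in> carrier (End_ring R Q act)" using aQ by (simp add: emod.E_simps[OF emQ])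
          show "a \<otimes>\<^bsub>End_ring R Q act\<^esub> z' \<in> carrier (End_ring R Q act)"
            using emod.Ecl(2)[OF emQ aE z'E] .
          show "a \<in> carrier (End_ring R Q act)" by (rule aE)
          fix n assume n: "n \<in> carrier Q"
          have "(\<phi> \<otimes>\<^bsub>End_ring R M act\<^esub> z) n = \<phi> n" using za by simp
          then have "\<phi> (z n) = \<phi> n" using n NM by (simp add: emod.Eapp[OF emM] QS subset_iff)
          then show "(a \<otimes>\<^bsub>End_ring R Q act\<^esub> z') n = a n"
            using n zN \<phi>a by (simp add: emod.Eapp[OF emQ] z'_def QS)
        qed
      qed
    qed
  qed
qed

end
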